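(* Let $V,Y$ be real Banach spaces with $V\hookrightarrow Y$ continuously and densely, $U\subset V$ open, $m\in\mathbb{N}$, $\mathcal{E}\colon U\to\mathbb{R}$ and $\mathcal{G}\colon U\to\mathbb{R}^m$ analytic, $\mathcal{M}=\{u\in U\mid\mathcal{G}(u)=0\}$, $\bar u\in U$. Assume: $\mathcal{E}'(u)\in Y^\ast$ for all $u$ and $u\mapsto\mathcal{E}'(u)$ is analytic $U\to Y^\ast$; each $\mathcal{G}'(u)$ extends to $\overline{\mathcal{G}'(u)}\in\mathcal{L}(Y,\mathbb{R}^m)$ with $u\mapsto\overline{\mathcal{G}'(u)}$ analytic; $\mathcal{G}(\bar u)=0$ and $\mathcal{G}'(\bar u)$ surjective. Let $V_0=\ker\mathcal{G}'(\bar u)$, $V_1$ a closed complement, $\Omega_0\subset V_0$, $\Omega_1\subset V_1$ open with $\bar u\in\Omega=\Omega_0+\Omega_1\subset U$, $\psi\colon\Omega_0\to V$ analytic with $\psi(\Omega_0)\subset\Omega_1$, $\mathcal{M}\cap\Omega=\{\omega+\psi(\omega)\mid\omega\in\Omega_0\}$, and $\mathcal{G}'(u)|_{V_1}$ an isomorphism onto $\mathbb{R}^m$ for all $u\in\Omega$. Let $\varphi(\omega)=\omega+\psi(\omega)$, $\bar\omega\in\Omega_0$ with $\varphi(\bar\omega)=\bar u$, $\mathcal{F}=\mathcal{E}\circ\varphi$, and regard $\mathcal{F}'(\omega)$ as an element of $\overline{V_0}^\ast$ via its continuous extension to the $Y$-closure $\overline{V_0}$ of $V_0$. Then the following are equivalent: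 (i) there exist $C,\sigma'>0$ and $\theta\in(0,\tfrac12]$ with $|\mathcal{F}(\omega)-\mathcal{F}(\bar\omega)|^{1-\theta}\le C\|\mathcal{F}'(\omega)\|_{\overline{V_0}^\ast}$ for all $\omega\in\Omega_0$ with $\|\omega-\bar\omega\|_V\le\sigma'$; (ii) there exist $C,\sigma>0$ and $\theta\in(0,\tfrac12]$ with $|\mathcal{E}(u)-\mathcal{E}(\bar u)|^{1-\theta}\le C\|\mathcal{E}'(u)\|_{\overline{\mathcal{T}_u\mathcal{M}}^\ast}$ for all $u\in\mathcal{M}$ with $\|u-\bar u\|_V\le\sigma$.
   Context: $\mathcal{T}_u\mathcal{M}=\{\gamma'(0)\mid\gamma\in C^1((-\varepsilon,\varepsilon);V),\ \gamma(t)\in\mathcal{M}\cap\Omega,\ \gamma(0)=u\}$; $\overline{\mathcal{T}_u\mathcal{M}}$ is its closure in $Y$, and $\|\mathcal{E}'(u)\|_{\overline{\mathcal{T}_u\mathcal{M}}^\ast}=\sup_{0\ne y\in\overline{\mathcal{T}_u\mathcal{M}}}\mathcal{E}'(u)y/\|y\|_Y$; similarly $\|\mathcal{F}'(\omega)\|_{\overline{V_0}^\ast}=\sup_{0\ne y\in\overline{V_0}}\mathcal{F}'(\omega)y/\|y\|_Y$. Analytic means locally given by norm-convergent power series of continuous multilinear maps. *)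

theory Defs
  imports "HOL-Analysis.Analysis"
begin

text \<open>A k-linear map on a subspace D, represented as a function of argument lists
  of length k: linear in each slot when all arguments lie in D.\<close>
definition multilinear_on :: "'a::real_vector set \<Rightarrow> nat \<Rightarrow> ('a list \<Rightarrow> 'b::real_vector) \<Rightarrow> bool" where
  "multilinear_on D k A \<longleftrightarrow>
     (\<forall>xs i a b c. length xs = k \<and> set xs \<subseteq> D \<and> i < k \<and> a \<in> D \<and> b \<in> D \<longrightarrow>
        A (xs[i := a + b]) = A (xs[i := a]) + A (xs[i := b]) \<and>
        A (xs[i := c *\<^sub>R a]) = c *\<^sub>R A (xs[i := a]))"

text \<open>Analyticity of f on S \<subseteq> D (D the ambient domain subspace): locally around each
  point, f is given by a power series of continuous multilinear maps on D whose
  operator norms (bounded by M k) give a convergent series M k * r^k.\<close>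
definition analytic_in :: "'a::real_normed_vector set \<Rightarrow> 'a set \<Rightarrow> ('a \<Rightarrow> 'b::real_normed_vector) \<Rightarrow> bool" where
  "analytic_in D S f \<longleftrightarrow>
     (\<forall>x\<in>S. \<exists>r>0. \<exists>A M.
        (\<forall>k. multilinear_on D k (A k)) \<and>
        (\<forall>k xs. length xs = k \<and> set xs \<subseteq> D \<longrightarrow> norm (A k xs) \<le> M k * prod_list (map norm xs)) \<and>
        summable (\<lambda>k. M k * r ^ k) \<and>
        (\<forall>h\<in>D. norm h < r \<longrightarrow> x + h \<in> S \<and> (\<lambda>k. A k (replicate k h)) sums f (x + h)))"

text \<open>Dual norm of a functional restricted to S: sup of l y / norm y over nonzero y in S
  (convention: 0 if S has no nonzero element).\<close>
definition dual_norm_on :: "'y::real_normed_vector set \<Rightarrow> ('y \<Rightarrow> real) \<Rightarrow> real" where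
  "dual_norm_on S l = (if S \<subseteq> {0} then 0 else (SUP y\<in>S - {0}. l y / norm y))"

definition tangent_space :: "'v::real_normed_vector set \<Rightarrow> 'v set \<Rightarrow> 'v \<Rightarrow> 'v set" where
  "tangent_space M \<Omega> u = {v. \<exists>\<epsilon>>0. \<exists>\<gamma> \<gamma>'.
      (\<forall>t\<in>{-\<epsilon><..<\<epsilon>}. (\<gamma> has_vector_derivative \<gamma>' t) (at t) \<and> \<gamma> t \<in> M \<inter> \<Omega>) \<and>
      continuous_on {-\<epsilon><..<\<epsilon>} \<gamma>' \<and> \<gamma> 0 = u \<and> v = \<gamma>' 0}"

end

theory Submission
  imports Defs
begin



lemma dir_unique:
  fixes f :: "'a::real_normed_vector \<Rightarrow> 'b::real_normed_vector"
  assumes d1: "(f has_derivative f1) (at x within S)" and d2: "(f has_derivative f2) (at x within S)"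
    and e: "e > 0" and line: "\<forall>t. \<bar>t\<bar> < e \<longrightarrow> x + t *\<^sub>R h \<in> S"
  shows "f1 h = f2 h"
proof -
  define p where "p = (\<lambda>t::real. x + t *\<^sub>R h)"
  have p: "(p has_derivative (\<lambda>t. t *\<^sub>R h)) (at 0 within ball 0 e)"
    unfolding p_def by (intro derivative_eq_intros) auto
  have img: "p ` ball 0 e \<subseteq> S" using line by (auto simp: p_def)
  have p0: "p 0 = x" by (simp add: p_def)
  have e1: "(f has_derivative f1) (at (p 0) within p ` ball 0 e)"
    unfolding p0 by (rule has_derivative_subset[OF d1 img])
  have e2: "(f has_derivative f2) (at (p 0) within p ` ball 0 e)"
    unfolding p0 by (rule has_derivative_subset[OF d2 img])
  have c1: "((f \<circ> p) has_derivative (f1 \<circ> (\<lambda>t. t *\<^sub>R h))) (at 0 within ball 0 e)"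
    by (rule diff_chain_within[OF p e1])
  have c2: "((f \<circ> p) has_derivative (f2 \<circ> (\<lambda>t. t *\<^sub>R h))) (at 0 within ball 0 e)"
    by (rule diff_chain_within[OF p e2])
  have at: "at (0::real) within ball 0 e = at 0" using e by (intro at_within_open) auto
  have "f1 \<circ> (\<lambda>t. t *\<^sub>R h) = f2 \<circ> (\<lambda>t. t *\<^sub>R h)"
    by (rule has_derivative_unique[OF c1[unfolded at] c2[unfolded at]])
  then have "(f1 \<circ> (\<lambda>t. t *\<^sub>R h)) 1 = (f2 \<circ> (\<lambda>t. t *\<^sub>R h)) 1" by simp
  then show ?thesis by simp
qed

lemma openin_line:
  fixes V :: "'a::real_normed_vector set"
  assumes "openin (top_of_set V) W" "subspace V" "w \<in> W" "h \<in> V"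
  shows "\<exists>e>0. \<forall>t. \<bar>t\<bar> < e \<longrightarrow> w + t *\<^sub>R h \<in> W"
proof -
  obtain d where d: "d > 0" "ball w d \<inter> V \<subseteq> W" "W \<subseteq> V"
    using assms(1,3) openin_contains_ball by metis
  have wV: "w \<in> V" using d assms by auto
  show ?thesis
  proof (intro exI[of _ "d / (norm h + 1)"] conjI allI impI)
    show "d / (norm h + 1) > 0" using d by (simp add: add_nonneg_pos)
    fix t :: real assume t: "\<bar>t\<bar> < d / (norm h + 1)"
    have "norm (t *\<^sub>R h) = \<bar>t\<bar> * norm h" by simp
    also have "\<dots> \<le> \<bar>t\<bar> * (norm h + 1)" by (simp add: mult_left_mono)
    also have "\<dots> < d" using t by (simp add: pos_less_divide_eq add_nonneg_pos)
    finally have "dist w (w + t *\<^sub>R h) < d" by (simp add: dist_norm)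
    moreover have "w + t *\<^sub>R h \<in> V" using wV assms(2,4) by (simp add: subspace_add subspace_scale)
    ultimately show "w + t *\<^sub>R h \<in> W" using d by auto
  qed
qed



lemma analytic_local:
  fixes f :: "'a::real_normed_vector \<Rightarrow> 'b::banach"
  assumes an: "analytic_in D S f" and xS: "x \<in> S" and D0: "0 \<in> D"
  shows "\<exists>r>0. \<exists>L K. (\<forall>h\<in>D. norm h < r \<longrightarrow> x + h \<in> S \<and> norm (f (x + h) - f x - L h) \<le> K * (norm h)\<^sup>2)
      \<and> (\<forall>a\<in>D. \<forall>b\<in>D. L (a + b) = L a + L b) \<and> (\<forall>a\<in>D. \<forall>c. L (c *\<^sub>R a) = c *\<^sub>R L a)
      \<and> (\<forall>h\<in>D. norm (L h) \<le> K * norm h)"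
proof -
  obtain r A M where r: "r > 0" and ml0: "\<forall>k. multilinear_on D k (A k)"
    and bd0: "\<forall>k xs. length xs = k \<and> set xs \<subseteq> D \<longrightarrow> norm (A k xs) \<le> M k * prod_list (map norm xs)"
    and sm: "summable (\<lambda>k. M k * r ^ k)"
    and ser0: "\<forall>h\<in>D. norm h < r \<longrightarrow> x + h \<in> S \<and> (\<lambda>k. A k (replicate k h)) sums f (x + h)"
  proof -
    have "\<exists>r>0. \<exists>A M. (\<forall>k. multilinear_on D k (A k)) \<and>
        (\<forall>k xs. length xs = k \<and> set xs \<subseteq> D \<longrightarrow> norm (A k xs) \<le> M k * prod_list (map norm xs)) \<and>
        summable (\<lambda>k. M k * r ^ k) \<and>
        (\<forall>h\<in>D. norm h < r \<longrightarrow> x + h \<in> S \<and> (\<lambda>k. A k (replicate k h)) sums f (x + h))"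
      using an xS unfolding analytic_in_def by (rule bspec)
    then show thesis apply - apply (elim exE conjE) apply (rule that) apply assumption+ done
  qed
  have ml: "\<And>k. multilinear_on D k (A k)" using ml0 by blast
  have bd: "\<And>k xs. length xs = k \<Longrightarrow> set xs \<subseteq> D \<Longrightarrow> norm (A k xs) \<le> M k * prod_list (map norm xs)"
    using bd0 by blast
  have ser: "\<And>h. h \<in> D \<Longrightarrow> norm h < r \<Longrightarrow> x + h \<in> S \<and> (\<lambda>k. A k (replicate k h)) sums f (x + h)"
    using ser0 by blast
  define L where "L = (\<lambda>h. A 1 [h])"
  have z: "A k (replicate k 0) = 0" if "k \<ge> 1" for k
  proof -
    have "A k ((replicate k 0)[0 := 0 *\<^sub>R 0]) = 0 *\<^sub>R A k ((replicate k 0)[0 := 0])"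
      using ml[of k] D0 that unfolding multilinear_on_def by (metis length_replicate less_le_trans set_replicate_Suc zero_less_one
          empty_subsetI insert_subset set_replicate_conv_if)
    moreover have "(replicate k (0::'a))[0 := 0] = replicate k 0" using that by (cases k) auto
    ultimately show ?thesis by simp
  qed
  have fx: "f x = A 0 []"
  proof -
    have "(\<lambda>k. A k (replicate k 0)) sums f (x + 0)" using ser[of 0] D0 r by simp
    moreover have "(\<lambda>k. A k (replicate k 0)) = (\<lambda>k. if k = 0 then A 0 [] else 0)"
      using z by (auto simp: fun_eq_iff)
    ultimately have "(\<lambda>k. if k = 0 then A 0 [] else 0) sums f x" by simp
    moreover have "(\<lambda>k. if k = 0 then A 0 [] else 0) sums A 0 []"
      using sums_single[of 0 "\<lambda>_. A 0 []"] by simp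
    ultimately show ?thesis using sums_unique2 by blast
  qed
  have Ladd: "\<forall>a\<in>D. \<forall>b\<in>D. L (a + b) = L a + L b"
    using ml[of 1] unfolding multilinear_on_def L_def
    by (metis (no_types, lifting) One_nat_def empty_set empty_subsetI insert_subset length_Cons list.size(3) list_update_code(2) list.set(2) zero_less_one)
  have Lsc: "\<forall>a\<in>D. \<forall>c. L (c *\<^sub>R a) = c *\<^sub>R L a"
    using ml[of 1] unfolding multilinear_on_def L_def
    by (metis (no_types, lifting) One_nat_def empty_set empty_subsetI insert_subset length_Cons list.size(3) list_update_code(2) list.set(2) zero_less_one)
  have Lb: "norm (L h) \<le> M 1 * norm h" if "h \<in> D" for h
    using bd[of "[h]" 1] that by (simp add: L_def)
  define S2 where "S2 = (\<Sum>k. M (k + 2) * r ^ (k + 2))"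
  have sm2: "summable (\<lambda>k. M (k + 2) * r ^ (k + 2))"
    using summable_ignore_initial_segment[OF sm, of 2] by simp
  define K where "K = max \<bar>M 1\<bar> (\<bar>S2\<bar> / r\<^sup>2)"
  have main: "norm (f (x + h) - f x - L h) \<le> K * (norm h)\<^sup>2" if h: "h \<in> D" "norm h < r" for h
  proof (cases "h = 0")
    case True
    then show ?thesis using z[of 1] by (simp add: L_def)
  next
    case False
    define g where "g = (\<lambda>k. A k (replicate k h))"
    have gs: "g sums f (x + h)" using ser h by (simp add: g_def)
    have g2: "(\<lambda>k. g (k + 2)) sums (f (x + h) - (g 0 + g 1))"
      using sums_split_initial_segment[OF gs, of 2] by (simp add: numeral_2_eq_2)
    have "g 0 = f x" by (simp add: g_def fx)
    moreover have "g 1 = L h" by (simp add: g_def L_def)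
    ultimately have eq: "f (x + h) - f x - L h = (\<Sum>k. g (k + 2))"
      using g2 sums_unique by (metis diff_diff_eq)
    have nh: "norm h > 0" using False by simp
    have gb: "norm (g k) \<le> M k * norm h ^ k" for k
    proof -
      have "set (replicate k h) \<subseteq> D" using h by (cases k) auto
      then show ?thesis using bd[of "replicate k h" k] by (simp add: g_def prod_list_replicate)
    qed
    have Mnn: "M k \<ge> 0" for k
    proof -
      have "0 \<le> M k * norm h ^ k" using gb[of k] norm_ge_zero order_trans by blast
      moreover have "norm h ^ k > 0" using nh by simp
      ultimately show ?thesis by (simp add: zero_le_mult_iff)
    qed
    define c where "c = (norm h)\<^sup>2 / r\<^sup>2"
    have c0: "c \<ge> 0" by (simp add: c_def)
    have gb2: "norm (g (k + 2)) \<le> c * (M (k + 2) * r ^ (k + 2))" for k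
    proof -
      have "norm (g (k + 2)) \<le> M (k + 2) * norm h ^ (k + 2)" by (rule gb)
      also have "norm h ^ (k + 2) = (norm h)\<^sup>2 * norm h ^ k" by (simp add: power_add power2_eq_square mult.commute)
      also have "norm h ^ k \<le> r ^ k" using h by (simp add: power_mono)
      then have "M (k + 2) * ((norm h)\<^sup>2 * norm h ^ k) \<le> M (k + 2) * ((norm h)\<^sup>2 * r ^ k)"
        by (simp add: Mnn mult_left_mono)
      also have "M (k + 2) * ((norm h)\<^sup>2 * r ^ k) = c * (M (k + 2) * r ^ (k + 2))"
        using r by (simp add: c_def power_add field_simps power2_eq_square)
      finally show ?thesis .
    qed
    have smc: "summable (\<lambda>k. c * (M (k + 2) * r ^ (k + 2)))" using sm2 by (rule summable_mult)
    have smn: "summable (\<lambda>k. norm (g (k + 2)))"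
      by (rule summable_comparison_test[OF _ smc]) (use gb2 in auto)
    have "norm (\<Sum>k. g (k + 2)) \<le> (\<Sum>k. norm (g (k + 2)))" using summable_norm[of "\<lambda>k. g (k + 2)"] smn by simp
    also have "\<dots> \<le> (\<Sum>k. c * (M (k + 2) * r ^ (k + 2)))"
      by (rule suminf_le[OF gb2 smn smc])
    also have "\<dots> = c * S2" unfolding S2_def by (rule suminf_mult[OF sm2])
    also have "\<dots> \<le> c * \<bar>S2\<bar>" using c0 by (simp add: mult_left_mono)
    also have "\<dots> = (norm h)\<^sup>2 * (\<bar>S2\<bar> / r\<^sup>2)" by (simp add: c_def)
    also have "\<dots> \<le> (norm h)\<^sup>2 * K" unfolding K_def by (intro mult_left_mono) auto
    finally show ?thesis using eq by (simp add: mult.commute)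
  qed
  show ?thesis
  proof (intro exI conjI)
    show "r > 0" by (fact r)
    show "\<forall>h\<in>D. norm h < r \<longrightarrow> x + h \<in> S \<and> norm (f (x + h) - f x - L h) \<le> K * (norm h)\<^sup>2"
      using ser main by blast
    show "\<forall>h\<in>D. norm (L h) \<le> K * norm h"
    proof
      fix h assume "h \<in> D"
      then have "norm (L h) \<le> M 1 * norm h" by (rule Lb)
      also have "\<dots> \<le> K * norm h" by (simp add: K_def mult_right_mono)
      finally show "norm (L h) \<le> K * norm h" .
    qed
  qed (use Ladd Lsc in auto)
qed


lemma analytic_has_derivative:
  fixes f :: "'a::real_normed_vector \<Rightarrow> 'b::banach"
  assumes an: "analytic_in D S f" and xS: "x \<in> S" and sD: "subspace D" and SD: "S \<subseteq> D"
    and P: "bounded_linear P" "\<forall>y. P y \<in> D" "\<forall>y\<in>D. P y = y"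
  shows "\<exists>f'. (f has_derivative f') (at x within S)"
proof -
  have D0: "0 \<in> D" using sD by (rule subspace_0)
  obtain r L K where r: "r > 0"
    and loc: "\<forall>h\<in>D. norm h < r \<longrightarrow> x + h \<in> S \<and> norm (f (x + h) - f x - L h) \<le> K * (norm h)\<^sup>2"
    and Ladd: "\<forall>a\<in>D. \<forall>b\<in>D. L (a + b) = L a + L b" and Lsc: "\<forall>a\<in>D. \<forall>c. L (c *\<^sub>R a) = c *\<^sub>R L a"
    and Lb: "\<forall>h\<in>D. norm (L h) \<le> K * norm h"
    using analytic_local[OF an xS D0] by blast
  obtain KP where KP: "\<And>y. norm (P y) \<le> norm y * KP"
    using bounded_linear.bounded[OF P(1)] by blast
  interpret P: bounded_linear P by (fact P(1))
  have bl: "bounded_linear (\<lambda>y. L (P y))"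
  proof (rule bounded_linear_intro[where K = "\<bar>K\<bar> * \<bar>KP\<bar>"])
    fix a b show "L (P (a + b)) = L (P a) + L (P b)" using Ladd P(2) by (simp add: P.add)
  next
    fix c a show "L (P (c *\<^sub>R a)) = c *\<^sub>R L (P a)" using Lsc P(2) by (simp add: P.scale)
  next
    fix y
    have "norm (L (P y)) \<le> K * norm (P y)" using Lb P(2) by blast
    also have "\<dots> \<le> \<bar>K\<bar> * norm (P y)" by (simp add: mult_right_mono)
    also have "\<dots> \<le> \<bar>K\<bar> * (norm y * KP)" by (simp add: KP mult_left_mono)
    also have "\<dots> \<le> \<bar>K\<bar> * (norm y * \<bar>KP\<bar>)" by (intro mult_left_mono) auto
    also have "\<dots> = norm y * (\<bar>K\<bar> * \<bar>KP\<bar>)" by (simp add: algebra_simps)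
    finally show "norm (L (P y)) \<le> norm y * (\<bar>K\<bar> * \<bar>KP\<bar>)" .
  qed
  have "(f has_derivative (\<lambda>y. L (P y))) (at x within S)"
    unfolding has_derivative_within
  proof (intro conjI bl, rule Lim_null_comparison)
    show "((\<lambda>y. \<bar>K\<bar> * norm (y - x)) \<longlongrightarrow> 0) (at x within S)"
      by (intro tendsto_mult_right_zero tendsto_norm_zero LIM_zero tendsto_ident_at)
    show "\<forall>\<^sub>F y in at x within S. norm ((1 / norm (y - x)) *\<^sub>R (f y - (f x + L (P (y - x))))) \<le> \<bar>K\<bar> * norm (y - x)"
      unfolding eventually_at
    proof (intro exI[of _ r] conjI ballI impI)
      show "r > 0" by (fact r)
      fix y assume y: "y \<in> S" "y \<noteq> x \<and> dist y x < r"
      have hD: "y - x \<in> D" using y(1) xS SD sD by (meson subsetD subspace_diff)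
      have "norm (f (x + (y - x)) - f x - L (y - x)) \<le> K * (norm (y - x))\<^sup>2"
        using loc hD y(2) by (auto simp: dist_norm)
      then have n: "norm (f y - (f x + L (P (y - x)))) \<le> K * (norm (y - x))\<^sup>2"
        using P(3) hD by (simp add: algebra_simps)
      have pos: "norm (y - x) > 0" using y(2) by (simp add: dist_norm)
      have "norm ((1 / norm (y - x)) *\<^sub>R (f y - (f x + L (P (y - x))))) = norm (f y - (f x + L (P (y - x)))) / norm (y - x)"
        by simp
      also have "\<dots> \<le> K * (norm (y - x))\<^sup>2 / norm (y - x)" using n pos by (simp add: divide_right_mono)
      also have "\<dots> = K * norm (y - x)" using pos by (simp add: power2_eq_square)
      also have "\<dots> \<le> \<bar>K\<bar> * norm (y - x)" by (simp add: mult_right_mono)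
      finally show "norm ((1 / norm (y - x)) *\<^sub>R (f y - (f x + L (P (y - x))))) \<le> \<bar>K\<bar> * norm (y - x)" .
    qed
  qed
  then show ?thesis by blast
qed



lemma closure_neg:
  fixes S :: "'a::real_normed_vector set"
  assumes "\<forall>y\<in>S. - y \<in> S" "y \<in> closure S"
  shows "- y \<in> closure S"
proof -
  have "closed (uminus -` closure S)"
    by (intro continuous_closed_vimage) (auto intro: continuous_intros)
  moreover have "S \<subseteq> uminus -` closure S" using assms(1) closure_subset by fastforce
  ultimately have "closure S \<subseteq> uminus -` closure S" by (rule closure_minimal[rotated])
  then show ?thesis using assms(2) by auto
qed

lemma dual_lower:
  fixes l :: "'a::real_normed_vector \<Rightarrow> real"
  assumes l: "bounded_linear l" and y: "y \<in> closure S" "y \<noteq> 0"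
  shows "l y / norm y \<le> dual_norm_on (closure S) l"
proof -
  obtain K where K: "\<And>x. norm (l x) \<le> norm x * K" using bounded_linear.bounded[OF l] by blast
  have bx: "l x / norm x \<le> K" if "x \<in> closure S - {0}" for x
  proof -
    have "norm x > 0" using that by simp
    have "l x \<le> norm x * K" using K[of x] by simp
    then show "l x / norm x \<le> K" using \<open>norm x > 0\<close> by (simp add: divide_le_eq mult.commute)
  qed
  have bdd: "bdd_above ((\<lambda>y. l y / norm y) ` (closure S - {0}))"
    by (rule bdd_aboveI[where M=K]) (use bx in auto)
  have "\<not> closure S \<subseteq> {0}" using y by auto
  then have "dual_norm_on (closure S) l = (SUP y\<in>closure S - {0}. l y / norm y)"
    by (simp add: dual_norm_on_def)
  moreover have "l y / norm y \<le> (SUP y\<in>closure S - {0}. l y / norm y)"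
    by (rule cSUP_upper[OF _ bdd]) (use y in auto)
  ultimately show ?thesis by simp
qed

lemma dual_upper:
  fixes l :: "'a::real_normed_vector \<Rightarrow> real"
  assumes l: "bounded_linear l" and c: "c \<ge> 0" and b: "\<forall>y\<in>S. l y \<le> c * norm y"
  shows "dual_norm_on (closure S) l \<le> c"
proof -
  have cl: "closed {y. l y \<le> c * norm y}"
    by (intro closed_Collect_le continuous_intros linear_continuous_on l)
  have "closure S \<subseteq> {y. l y \<le> c * norm y}"
    by (rule closure_minimal) (use b cl in auto)
  show ?thesis
  proof (cases "closure S \<subseteq> {0}")
    case True then show ?thesis using c by (simp add: dual_norm_on_def)
  next
    case False
    then have ne: "closure S - {0} \<noteq> {}" by auto
    have "(SUP y\<in>closure S - {0}. l y / norm y) \<le> c"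
    proof (rule cSUP_least[OF ne])
      fix x assume x: "x \<in> closure S - {0}"
      then have "l x \<le> c * norm x" "norm x > 0" using \<open>closure S \<subseteq> _\<close> by auto
      then show "l x / norm x \<le> c" by (simp add: divide_le_eq)
    qed
    then show ?thesis using False by (simp add: dual_norm_on_def)
  qed
qed

lemma dual_nonneg:
  fixes l :: "'a::real_normed_vector \<Rightarrow> real"
  assumes l: "bounded_linear l" and sym: "\<forall>y\<in>S. - y \<in> S"
  shows "dual_norm_on (closure S) l \<ge> 0"
proof (cases "closure S \<subseteq> {0}")
  case True then show ?thesis by (simp add: dual_norm_on_def)
next
  case False
  then obtain y where y: "y \<in> closure S" "y \<noteq> 0" by auto
  have my: "- y \<in> closure S" by (rule closure_neg[OF sym y(1)])
  have a: "l y / norm y \<le> dual_norm_on (closure S) l" by (rule dual_lower[OF l y])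
  have b: "l (- y) / norm (- y) \<le> dual_norm_on (closure S) l" by (rule dual_lower[OF l my]) (use y in simp)
  have "l (- y) = - l y" using l by (simp add: linear_neg bounded_linear.linear)
  then have "l (- y) / norm (- y) = - (l y / norm y)" by simp
  then show ?thesis using a b by linarith
qed

lemma inv_bound:
  fixes T :: "'a::real_normed_vector \<Rightarrow> 'b::euclidean_space"
  assumes T: "linear T" and V: "subspace V" and bij: "bij_betw T V UNIV"
  shows "\<exists>Ti. bounded_linear Ti \<and> (\<forall>y. Ti y \<in> V \<and> T (Ti y) = y) \<and> (\<forall>v\<in>V. Ti (T v) = v)"
proof -
  define Ti where "Ti = inv_into V T"
  have inj: "inj_on T V" and im: "T ` V = UNIV" using bij by (auto simp: bij_betw_def)
  have inV: "Ti y \<in> V" for y unfolding Ti_def by (rule inv_into_into) (simp add: im)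
  have TTi: "T (Ti y) = y" for y unfolding Ti_def by (rule f_inv_into_f) (simp add: im)
  have TiT: "Ti (T v) = v" if "v \<in> V" for v unfolding Ti_def by (rule inv_into_f_f[OF inj that])
  have lin: "linear Ti"
  proof (rule linearI)
    fix a b
    have "Ti a + Ti b \<in> V" using inV V by (simp add: subspace_add)
    moreover have "T (Ti a + Ti b) = a + b" using T TTi by (simp add: linear_add)
    ultimately show "Ti (a + b) = Ti a + Ti b" using TiT by metis
  next
    fix c :: real and a
    have "c *\<^sub>R Ti a \<in> V" using inV V by (simp add: subspace_scale)
    moreover have "T (c *\<^sub>R Ti a) = c *\<^sub>R a" using T TTi by (simp add: linear_scale)
    ultimately show "Ti (c *\<^sub>R a) = c *\<^sub>R Ti a" using TiT by metis
  qed
  then have "bounded_linear Ti" by (simp add: linear_conv_bounded_linear)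
  then show ?thesis using inV TTi TiT by blast
qed



lemma cont_w:
  fixes J :: "'v::real_normed_vector \<Rightarrow> 'y::real_normed_vector"
    and dGt :: "real \<Rightarrow> ('y \<Rightarrow>\<^sub>L 'z::real_normed_vector)" and w :: "real \<Rightarrow> 'v"
  assumes J: "bounded_linear J" and V1: "subspace V1"
    and wV: "\<forall>t\<in>I. w t \<in> V1" and t0: "t0 \<in> I"
    and eq: "\<forall>t\<in>I. blinfun_apply (dGt t) (J (h + w t)) = 0"
    and cont: "continuous (at t0 within I) dGt"
    and K0: "\<forall>v\<in>V1. norm v \<le> K0 * norm (blinfun_apply (dGt t0) (J v))"
  shows "continuous (at t0 within I) w"
proof -
  interpret J: bounded_linear J by (fact J)
  obtain KJ where KJ: "KJ > 0" "\<And>x. norm (J x) \<le> norm x * KJ" using J.pos_bounded by blast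
  define K where "K = \<bar>K0\<bar> * KJ"
  have K: "K \<ge> 0" using KJ by (simp add: K_def)
  define e where "e = (\<lambda>t. norm (dGt t - dGt t0))"
  define c where "c = norm h + norm (w t0)"
  have c: "c \<ge> 0" by (simp add: c_def)
  have e0: "(e \<longlongrightarrow> 0) (at t0 within I)"
    unfolding e_def using cont by (intro tendsto_norm_zero LIM_zero) (simp add: continuous_within)
  have "((\<lambda>t. K * e t) \<longlongrightarrow> 0) (at t0 within I)" by (intro tendsto_mult_right_zero e0)
  then have ev: "\<forall>\<^sub>F t in at t0 within I. K * e t < 1/2" by (rule order_tendstoD(2)) simp
  have ev2: "\<forall>\<^sub>F t in at t0 within I. t \<in> I" by (rule eventually_at_topological[THEN iffD2]) auto
  have bound: "norm (w t - w t0) \<le> 2 * K * c * e t" if t: "t \<in> I" "K * e t < 1/2" for t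
  proof -
    define d where "d = w t - w t0"
    have dV: "d \<in> V1" using wV t t0 V1 by (simp add: d_def subspace_diff)
    have Jd: "J d = J (h + w t) - J (h + w t0)" by (simp add: d_def J.diff J.add)
    have "blinfun_apply (dGt t0) (J d) = blinfun_apply (dGt t0) (J (h + w t))"
      using eq t0 by (simp add: Jd blinfun.diff_right)
    also have "\<dots> = blinfun_apply (dGt t0 - dGt t) (J (h + w t))"
      using eq t by (simp add: blinfun.diff_left)
    finally have eqd: "blinfun_apply (dGt t0) (J d) = blinfun_apply (dGt t0 - dGt t) (J (h + w t))" .
    have "norm (blinfun_apply (dGt t0 - dGt t) (J (h + w t))) \<le> norm (dGt t0 - dGt t) * norm (J (h + w t))"
      by (rule norm_blinfun)
    also have "norm (dGt t0 - dGt t) = e t" by (simp add: e_def norm_minus_commute)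
    also have "norm (J (h + w t)) \<le> norm (h + w t) * KJ" by (rule KJ(2))
    also have "norm (h + w t) \<le> c + norm d"
    proof -
      have "h + w t = (h + w t0) + d" by (simp add: d_def)
      then have "norm (h + w t) \<le> norm (h + w t0) + norm d" by (metis norm_triangle_ineq)
      moreover have "norm (h + w t0) \<le> norm h + norm (w t0)" by (rule norm_triangle_ineq)
      ultimately show ?thesis unfolding c_def by linarith
    qed
    finally have n1: "norm (blinfun_apply (dGt t0) (J d)) \<le> e t * ((c + norm d) * KJ)"
      unfolding eqd using KJ by (simp add: e_def mult_left_mono mult_right_mono)
    have "norm d \<le> K0 * norm (blinfun_apply (dGt t0) (J d))" using K0 dV by blast
    also have "\<dots> \<le> \<bar>K0\<bar> * norm (blinfun_apply (dGt t0) (J d))" by (simp add: mult_right_mono)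
    also have "\<dots> \<le> \<bar>K0\<bar> * (e t * ((c + norm d) * KJ))" by (rule mult_left_mono[OF n1]) simp
    also have "\<dots> = K * e t * c + K * e t * norm d" by (simp add: K_def algebra_simps)
    finally have n2: "norm d \<le> K * e t * c + K * e t * norm d" .
    have "K * e t * norm d \<le> (1/2) * norm d" using t(2) by (intro mult_right_mono) auto
    then have "norm d \<le> 2 * (K * e t * c)" using n2 by linarith
    then show ?thesis by (simp add: d_def algebra_simps)
  qed
  have "((\<lambda>t. w t - w t0) \<longlongrightarrow> 0) (at t0 within I)"
  proof (rule Lim_null_comparison)
    show "\<forall>\<^sub>F t in at t0 within I. norm (w t - w t0) \<le> 2 * K * c * e t"
      using ev ev2 by eventually_elim (use bound in auto)
    show "((\<lambda>t. 2 * K * c * e t) \<longlongrightarrow> 0) (at t0 within I)" by (intro tendsto_mult_right_zero e0)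
  qed
  then show ?thesis unfolding continuous_within by (simp add: LIM_zero_iff)
qed




theorem lemma4p2:
  fixes J :: "'v::banach \<Rightarrow> 'y::banach"
    and U :: "'v set"
    and E :: "'v \<Rightarrow> real" and G :: "'v \<Rightarrow> real ^ 'm"
    and dE :: "'v \<Rightarrow> ('y \<Rightarrow>\<^sub>L real)" and dG :: "'v \<Rightarrow> ('y \<Rightarrow>\<^sub>L (real ^ 'm))"
    and ubar :: 'v and V0 V1 \<Omega>0 \<Omega>1 \<Omega> M :: "'v set" and \<psi> :: "'v \<Rightarrow> 'v"
    and \<omega>bar :: 'v and dF :: "'v \<Rightarrow> ('y \<Rightarrow>\<^sub>L real)"
  assumes J: "bounded_linear J" "inj J" "closure (range J) = UNIV"
    and U: "open U"
    and E_an: "analytic_in UNIV U E" and G_an: "analytic_in UNIV U G"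
    and M_def: "M = {u \<in> U. G u = 0}"
    and ubar: "ubar \<in> U"
    and dE: "\<forall>u\<in>U. (E has_derivative (\<lambda>v. blinfun_apply (dE u) (J v))) (at u)"
    and dE_an: "analytic_in UNIV U dE"
    and dG: "\<forall>u\<in>U. (G has_derivative (\<lambda>v. blinfun_apply (dG u) (J v))) (at u)"
    and dG_an: "analytic_in UNIV U dG"
    and G_ubar: "G ubar = 0"
    and surj: "surj (\<lambda>v. blinfun_apply (dG ubar) (J v))"
    and V0_def: "V0 = {v. blinfun_apply (dG ubar) (J v) = 0}"
    and V1: "subspace V1" "closed V1" "V0 \<inter> V1 = {0}" "{a + b |a b. a \<in> V0 \<and> b \<in> V1} = UNIV"
    and \<Omega>0: "\<Omega>0 \<subseteq> V0" "openin (top_of_set V0) \<Omega>0"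
    and \<Omega>1: "\<Omega>1 \<subseteq> V1" "openin (top_of_set V1) \<Omega>1"
    and \<Omega>_def: "\<Omega> = {a + b |a b. a \<in> \<Omega>0 \<and> b \<in> \<Omega>1}"
    and \<Omega>U: "ubar \<in> \<Omega>" "\<Omega> \<subseteq> U"
    and \<psi>_an: "analytic_in V0 \<Omega>0 \<psi>"
    and \<psi>_img: "\<psi> ` \<Omega>0 \<subseteq> \<Omega>1"
    and M\<Omega>: "M \<inter> \<Omega> = {\<omega> + \<psi> \<omega> |\<omega>. \<omega> \<in> \<Omega>0}"
    and iso: "\<forall>u\<in>\<Omega>. bij_betw (\<lambda>v. blinfun_apply (dG u) (J v)) V1 UNIV"
    and \<omega>bar: "\<omega>bar \<in> \<Omega>0" "\<omega>bar + \<psi> \<omega>bar = ubar"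
    and dF: "\<forall>\<omega>\<in>\<Omega>0. ((\<lambda>\<omega>. E (\<omega> + \<psi> \<omega>)) has_derivative
                         (\<lambda>h. blinfun_apply (dF \<omega>) (J h))) (at \<omega> within \<Omega>0)"
  shows "(\<exists>C>0. \<exists>\<sigma>'>0. \<exists>\<theta>. 0 < \<theta> \<and> \<theta> \<le> 1/2 \<and>
            (\<forall>\<omega>\<in>\<Omega>0. norm (\<omega> - \<omega>bar) \<le> \<sigma>' \<longrightarrow>
               \<bar>E (\<omega> + \<psi> \<omega>) - E (\<omega>bar + \<psi> \<omega>bar)\<bar> powr (1 - \<theta>)
                 \<le> C * dual_norm_on (closure (J ` V0)) (blinfun_apply (dF \<omega>))))
     \<longleftrightarrow>
         (\<exists>C>0. \<exists>\<sigma>>0. \<exists>\<theta>. 0 < \<theta> \<and> \<theta> \<le> 1/2 \<and>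
            (\<forall>u\<in>M. norm (u - ubar) \<le> \<sigma> \<longrightarrow>
               \<bar>E u - E ubar\<bar> powr (1 - \<theta>)
                 \<le> C * dual_norm_on (closure (J ` tangent_space M \<Omega> u)) (blinfun_apply (dE u))))"
proof -
  define B where "B = (\<lambda>u v. blinfun_apply (dG u) (J v))"
  interpret J: bounded_linear J by (fact J(1))
  have Bbl: "bounded_linear (B u)" for u
    unfolding B_def by (intro bounded_linear_compose[OF blinfun.bounded_linear_right J(1)])
  have Blin: "linear (B u)" for u using Bbl[of u] by (rule bounded_linear.linear)
  have sV0: "subspace V0" unfolding V0_def using linear_subspace_kernel[OF Blin[of ubar]] by (simp add: B_def)
  have ubarO: "ubar \<in> \<Omega>" by (fact \<Omega>U(1))
  obtain Ti where Ti: "bounded_linear Ti" "\<forall>y. Ti y \<in> V1 \<and> B ubar (Ti y) = y" "\<forall>v\<in>V1. Ti (B ubar v) = v"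
    using inv_bound[OF Blin V1(1), of ubar] iso ubarO unfolding B_def by blast
  define P1 where "P1 = (\<lambda>v. Ti (B ubar v))"
  define P0 where "P0 = (\<lambda>v. v - P1 v)"
  have P1bl: "bounded_linear P1" unfolding P1_def by (rule bounded_linear_compose[OF Ti(1) Bbl])
  have P0bl: "bounded_linear P0" unfolding P0_def by (intro bounded_linear_sub bounded_linear_ident P1bl)
  have P1V1: "P1 v \<in> V1" for v using Ti by (simp add: P1_def)
  have P0V0: "P0 v \<in> V0" for v
  proof -
    have "B ubar (P0 v) = B ubar v - B ubar (P1 v)" by (simp add: P0_def linear_diff[OF Blin])
    also have "\<dots> = 0" using Ti by (simp add: P1_def)
    finally show ?thesis by (simp add: V0_def B_def)
  qed
  have P0sum: "P0 (a + b) = a" "P1 (a + b) = b" if "a \<in> V0" "b \<in> V1" for a b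
  proof -
    have "B ubar a = 0" using that by (simp add: V0_def B_def)
    then have "B ubar (a + b) = B ubar b" by (simp add: linear_add[OF Blin])
    then show "P1 (a + b) = b" using Ti that by (simp add: P1_def)
    then show "P0 (a + b) = a" by (simp add: P0_def)
  qed
  have P0id: "P0 a = a" if "a \<in> V0" for a using P0sum[OF that subspace_0[OF V1(1)]] by simp
  have P0V1: "P0 b = 0" if "b \<in> V1" for b using P0sum[OF subspace_0[OF sV0] that] by simp
  have P0P1: "v = P0 v + P1 v" for v by (simp add: P0_def)
  have KTi: "\<exists>KT. \<forall>v\<in>V1. norm v \<le> KT * norm (B u v)" if uO: "u \<in> \<Omega>" for u
  proof -
    obtain Tu where Tu: "bounded_linear Tu" "\<forall>y. Tu y \<in> V1 \<and> B u (Tu y) = y" "\<forall>v\<in>V1. Tu (B u v) = v"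
      using inv_bound[OF Blin V1(1), of u] iso uO unfolding B_def by blast
    obtain KT where KT: "\<And>y. norm (Tu y) \<le> norm y * KT" using bounded_linear.bounded[OF Tu(1)] by blast
    have "norm v \<le> KT * norm (B u v)" if "v \<in> V1" for v
      using KT[of "B u v"] Tu(3) that by (simp add: mult.commute)
    then show ?thesis by blast
  qed
  have O0V: "\<Omega>0 \<subseteq> V0" by (fact \<Omega>0(1))
  have phiM: "\<omega> + \<psi> \<omega> \<in> M \<inter> \<Omega>" "P0 (\<omega> + \<psi> \<omega>) = \<omega>" "\<psi> \<omega> \<in> V1" if w: "\<omega> \<in> \<Omega>0" for \<omega>
  proof -
    show "\<omega> + \<psi> \<omega> \<in> M \<inter> \<Omega>" unfolding M\<Omega> using w by blast
    have "\<psi> \<omega> \<in> \<Omega>1" using \<psi>_img w by blast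
    then show psV: "\<psi> \<omega> \<in> V1" using \<Omega>1(1) by (rule subsetD[rotated])
    have "\<omega> \<in> V0" using O0V w by (rule subsetD)
    then show "P0 (\<omega> + \<psi> \<omega>) = \<omega>" using psV by (rule P0sum(1))
  qed
  have ubar_dec: "P0 ubar = \<omega>bar" using phiM(2)[OF \<omega>bar(1)] \<omega>bar(2) by simp
  have phiU: "\<omega> + \<psi> \<omega> \<in> U" "G (\<omega> + \<psi> \<omega>) = 0" if w: "\<omega> \<in> \<Omega>0" for \<omega>
  proof -
    have m: "\<omega> + \<psi> \<omega> \<in> M" using phiM(1)[OF w] by (rule IntD1)
    have mm: "\<omega> + \<psi> \<omega> \<in> U \<and> G (\<omega> + \<psi> \<omega>) = 0" using m unfolding M_def by (rule CollectD)
    then show "\<omega> + \<psi> \<omega> \<in> U" by (rule conjunct1)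
    show "G (\<omega> + \<psi> \<omega>) = 0" using mm by (rule conjunct2)
  qed
  have MO: "P0 u \<in> \<Omega>0" "u = P0 u + \<psi> (P0 u)" if uM: "u \<in> M \<inter> \<Omega>" for u
  proof -
    have "u \<in> {\<omega> + \<psi> \<omega> |\<omega>. \<omega> \<in> \<Omega>0}" using uM unfolding M\<Omega> .
    then obtain \<omega> where w: "\<omega> \<in> \<Omega>0" "u = \<omega> + \<psi> \<omega>" by blast
    then have "P0 u = \<omega>" using phiM(2) by blast
    then show "P0 u \<in> \<Omega>0" "u = P0 u + \<psi> (P0 u)" using w by auto
  qed
  have Oopen: "open \<Omega>"
  proof -
    obtain O0 where O0: "open O0" "\<Omega>0 = V0 \<inter> O0" using \<Omega>0(2) openin_open by metis
    obtain O1 where O1: "open O1" "\<Omega>1 = V1 \<inter> O1" using \<Omega>1(2) openin_open by metis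
    have "\<Omega> = P0 -` O0 \<inter> P1 -` O1"
    proof (intro set_eqI iffI)
      fix v assume "v \<in> \<Omega>"
      then obtain a b where ab: "a \<in> \<Omega>0" "b \<in> \<Omega>1" "v = a + b" using \<Omega>_def by blast
      then have "a \<in> V0" "b \<in> V1" using \<Omega>0(1) \<Omega>1(1) by auto
      then show "v \<in> P0 -` O0 \<inter> P1 -` O1" using ab O0 O1 P0sum by auto
    next
      fix v assume "v \<in> P0 -` O0 \<inter> P1 -` O1"
      then have "P0 v \<in> \<Omega>0" "P1 v \<in> \<Omega>1" using O0 O1 P0V0 P1V1 by auto
      then show "v \<in> \<Omega>" using P0P1[of v] \<Omega>_def by blast
    qed
    moreover have "open (P0 -` O0)"
      by (rule continuous_open_vimage[OF O0(1)]) (simp add: linear_continuous_at P0bl)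
    moreover have "open (P1 -` O1)"
      by (rule continuous_open_vimage[OF O1(1)]) (simp add: linear_continuous_at P1bl)
    ultimately show ?thesis by auto
  qed
  have "\<forall>\<omega>\<in>\<Omega>0. \<exists>D. (\<psi> has_derivative D) (at \<omega> within \<Omega>0)"
  proof
    fix \<omega> assume "\<omega> \<in> \<Omega>0"
    show "\<exists>D. (\<psi> has_derivative D) (at \<omega> within \<Omega>0)"
      by (rule analytic_has_derivative[OF \<psi>_an \<open>\<omega> \<in> \<Omega>0\<close> sV0 O0V P0bl]) (use P0V0 P0id in auto)
  qed
  then obtain D\<psi> where D\<psi>: "\<And>\<omega>. \<omega> \<in> \<Omega>0 \<Longrightarrow> (\<psi> has_derivative D\<psi> \<omega>) (at \<omega> within \<Omega>0)"
    by metis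
  have D\<psi>bl: "bounded_linear (D\<psi> \<omega>)" if "\<omega> \<in> \<Omega>0" for \<omega>
    using D\<psi>[OF that] by (rule has_derivative_bounded_linear)
  have line: "\<exists>e>0. \<forall>t. \<bar>t\<bar> < e \<longrightarrow> \<omega> + t *\<^sub>R h \<in> \<Omega>0" if "\<omega> \<in> \<Omega>0" "h \<in> V0" for \<omega> h
    by (rule openin_line[OF \<Omega>0(2) sV0 that])
  have DV1: "D\<psi> \<omega> h \<in> V1" if w: "\<omega> \<in> \<Omega>0" and h: "h \<in> V0" for \<omega> h
  proof -
    have d1: "((\<lambda>x. P0 (\<psi> x)) has_derivative (\<lambda>y. P0 (D\<psi> \<omega> y))) (at \<omega> within \<Omega>0)"
      by (rule bounded_linear.has_derivative[OF P0bl D\<psi>[OF w]])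
    have d2: "((\<lambda>x. P0 (\<psi> x)) has_derivative (\<lambda>y. 0)) (at \<omega> within \<Omega>0)"
    proof (rule has_derivative_transform_within[OF has_derivative_const zero_less_one w])
      fix x assume "x \<in> \<Omega>0"
      then show "0 = P0 (\<psi> x)" using P0V1 phiM(3) by metis
    qed
    obtain e where e: "e > 0" "\<forall>t. \<bar>t\<bar> < e \<longrightarrow> \<omega> + t *\<^sub>R h \<in> \<Omega>0" using line[OF w h] by blast
    have "P0 (D\<psi> \<omega> h) = 0" using dir_unique[OF d1 d2 e] .
    then have "D\<psi> \<omega> h = P1 (D\<psi> \<omega> h)" using P0P1[of "D\<psi> \<omega> h"] by simp
    then show ?thesis using P1V1 by metis
  qed
  have dphi: "((\<lambda>x. x + \<psi> x) has_derivative (\<lambda>y. y + D\<psi> \<omega> y)) (at \<omega> within \<Omega>0)" if w: "\<omega> \<in> \<Omega>0" for \<omega>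
    by (rule has_derivative_add[OF has_derivative_ident D\<psi>[OF w]])
  have DG0: "B (\<omega> + \<psi> \<omega>) (h + D\<psi> \<omega> h) = 0" if w: "\<omega> \<in> \<Omega>0" and h: "h \<in> V0" for \<omega> h
  proof -
    have dGu: "(G has_derivative B (\<omega> + \<psi> \<omega>)) (at (\<omega> + \<psi> \<omega>))"
      using dG phiU(1)[OF w] unfolding B_def by blast
    have d1: "((\<lambda>x. G (x + \<psi> x)) has_derivative (\<lambda>y. B (\<omega> + \<psi> \<omega>) (y + D\<psi> \<omega> y))) (at \<omega> within \<Omega>0)"
      by (rule has_derivative_compose[OF dphi[OF w] dGu])
    have d2: "((\<lambda>x. G (x + \<psi> x)) has_derivative (\<lambda>y. 0)) (at \<omega> within \<Omega>0)"
    proof (rule has_derivative_transform_within[OF has_derivative_const zero_less_one w])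
      fix x assume "x \<in> \<Omega>0"
      then show "0 = G (x + \<psi> x)" using phiU(2) by metis
    qed
    obtain e where e: "e > 0" "\<forall>t. \<bar>t\<bar> < e \<longrightarrow> \<omega> + t *\<^sub>R h \<in> \<Omega>0" using line[OF w h] by blast
    show ?thesis using dir_unique[OF d1 d2 e] .
  qed
  have DF: "blinfun_apply (dF \<omega>) (J h) = blinfun_apply (dE (\<omega> + \<psi> \<omega>)) (J (h + D\<psi> \<omega> h))"
    if w: "\<omega> \<in> \<Omega>0" and h: "h \<in> V0" for \<omega> h
  proof -
    have dEu: "(E has_derivative (\<lambda>v. blinfun_apply (dE (\<omega> + \<psi> \<omega>)) (J v))) (at (\<omega> + \<psi> \<omega>))"
      using dE phiU(1)[OF w] by blast
    have d1: "((\<lambda>x. E (x + \<psi> x)) has_derivative (\<lambda>y. blinfun_apply (dE (\<omega> + \<psi> \<omega>)) (J (y + D\<psi> \<omega> y)))) (at \<omega> within \<Omega>0)"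
      by (rule has_derivative_compose[OF dphi[OF w] dEu])
    have d2: "((\<lambda>x. E (x + \<psi> x)) has_derivative (\<lambda>h. blinfun_apply (dF \<omega>) (J h))) (at \<omega> within \<Omega>0)"
      using dF w by blast
    obtain e where e: "e > 0" "\<forall>t. \<bar>t\<bar> < e \<longrightarrow> \<omega> + t *\<^sub>R h \<in> \<Omega>0" using line[OF w h] by blast
    show ?thesis using dir_unique[OF d2 d1 e] .
  qed
  obtain KT0 where KT0: "\<forall>v\<in>V1. norm v \<le> KT0 * norm (B ubar v)" using KTi[OF ubarO] by blast
  obtain KJ where KJ: "KJ > 0" "\<And>x. norm (J x) \<le> norm x * KJ" using J.pos_bounded by blast
  define KY where "KY = KJ * \<bar>KT0\<bar>"
  have KY0: "KY \<ge> 0" using KJ by (simp add: KY_def)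
  have KYb: "norm (J v) \<le> KY * norm (B ubar v)" if v: "v \<in> V1" for v
  proof -
    have "norm (J v) \<le> norm v * KJ" by (rule KJ(2))
    also have "norm v \<le> \<bar>KT0\<bar> * norm (B ubar v)"
      using KT0 v by (meson abs_ge_self mult_right_mono norm_ge_zero order_trans)
    then have "norm v * KJ \<le> \<bar>KT0\<bar> * norm (B ubar v) * KJ" using KJ by (simp add: mult_right_mono)
    finally show ?thesis by (simp add: KY_def algebra_simps)
  qed
  define c1 where "c1 = 1 + KY * norm (dG ubar)"
  have c1pos: "c1 > 0" using KY0 by (simp add: c1_def add_pos_nonneg)
  have easy: "norm (J h) \<le> c1 * norm (J (h + D\<psi> \<omega> h))" if w: "\<omega> \<in> \<Omega>0" and h: "h \<in> V0" for \<omega> h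
  proof -
    define v where "v = D\<psi> \<omega> h"
    have vV: "v \<in> V1" using DV1[OF w h] by (simp add: v_def)
    have "B ubar h = 0" using h by (simp add: V0_def B_def)
    then have "B ubar v = B ubar (h + v)" by (simp add: linear_add[OF Blin])
    then have "norm (B ubar v) \<le> norm (dG ubar) * norm (J (h + v))"
      by (simp add: B_def norm_blinfun)
    then have "norm (J v) \<le> KY * (norm (dG ubar) * norm (J (h + v)))"
      using KYb[OF vV] KY0 by (meson mult_left_mono order_trans)
    moreover have "norm (J h) \<le> norm (J (h + v)) + norm (J v)"
    proof -
      have "J h = J (h + v) - J v" by (simp add: J.add)
      then show ?thesis by (metis norm_triangle_ineq4)
    qed
    ultimately show ?thesis by (simp add: c1_def v_def algebra_simps)
  qed
  have dGcont: "isCont dG u" if u: "u \<in> U" for u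
  proof -
    obtain D where "(dG has_derivative D) (at u within U)"
      using analytic_has_derivative[OF dG_an u subspace_UNIV subset_UNIV bounded_linear_ident] by auto
    then have "continuous (at u within U) dG" by (rule has_derivative_continuous)
    then show ?thesis using at_within_open[OF u U] by simp
  qed
  have hard: "\<exists>\<delta>>0. \<forall>\<omega>\<in>\<Omega>0. norm (\<omega> + \<psi> \<omega> - ubar) < \<delta> \<longrightarrow> (\<forall>h\<in>V0. norm (J (h + D\<psi> \<omega> h)) \<le> 2 * norm (J h))"
  proof -
    define \<epsilon> where "\<epsilon> = 1 / (2 * KY + 1)"
    have \<epsilon>: "\<epsilon> > 0" "KY * \<epsilon> \<le> 1/2" using KY0 by (auto simp: \<epsilon>_def field_simps)
    obtain \<delta> where \<delta>: "\<delta> > 0" "\<And>u. dist u ubar < \<delta> \<Longrightarrow> dist (dG u) (dG ubar) < \<epsilon>"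
      using dGcont[OF ubar] \<epsilon>(1) unfolding continuous_at_eps_delta by metis
    show ?thesis
    proof (intro exI[of _ \<delta>] conjI ballI impI)
      show "\<delta> > 0" by (fact \<delta>(1))
      fix \<omega> h assume w: "\<omega> \<in> \<Omega>0" and d: "norm (\<omega> + \<psi> \<omega> - ubar) < \<delta>" and h: "h \<in> V0"
      define u where "u = \<omega> + \<psi> \<omega>"
      define v where "v = D\<psi> \<omega> h"
      have vV: "v \<in> V1" using DV1[OF w h] by (simp add: v_def)
      have Bu: "B u (h + v) = 0" using DG0[OF w h] by (simp add: u_def v_def)
      have "B ubar h = 0" using h by (simp add: V0_def B_def)
      then have "B ubar v = B ubar (h + v)" by (simp add: linear_add[OF Blin])
      also have "\<dots> = B ubar (h + v) - B u (h + v)" using Bu by simp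
      also have "\<dots> = blinfun_apply (dG ubar - dG u) (J (h + v))" by (simp add: B_def blinfun.diff_left)
      finally have "norm (B ubar v) \<le> norm (dG ubar - dG u) * norm (J (h + v))"
        by (simp add: norm_blinfun)
      moreover have "norm (dG ubar - dG u) \<le> \<epsilon>"
        using \<delta>(2)[of u] d by (simp add: u_def dist_norm norm_minus_commute)
      ultimately have "norm (B ubar v) \<le> \<epsilon> * norm (J (h + v))"
        by (meson mult_right_mono norm_ge_zero order_trans)
      then have "norm (J v) \<le> KY * (\<epsilon> * norm (J (h + v)))"
        using KYb[OF vV] KY0 by (meson mult_left_mono order_trans)
      also have "norm (J (h + v)) \<le> norm (J h) + norm (J v)" by (simp add: J.add norm_triangle_ineq)
      then have "KY * (\<epsilon> * norm (J (h + v))) \<le> KY * (\<epsilon> * (norm (J h) + norm (J v)))"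
        using KY0 \<epsilon>(1) by (simp add: mult_left_mono)
      also have "\<dots> = (KY * \<epsilon>) * (norm (J h) + norm (J v))" by simp
      also have "\<dots> \<le> 1/2 * (norm (J h) + norm (J v))" using \<epsilon>(2) by (intro mult_right_mono) auto
      finally have "norm (J v) \<le> norm (J h)" by simp
      moreover have "norm (J (h + v)) \<le> norm (J h) + norm (J v)" by (simp add: J.add norm_triangle_ineq)
      ultimately show "norm (J (h + D\<psi> \<omega> h)) \<le> 2 * norm (J h)" by (simp add: v_def)
    qed
  qed
  have T1: "\<exists>h\<in>V0. v = h + D\<psi> \<omega> h" if w: "\<omega> \<in> \<Omega>0" and v: "v \<in> tangent_space M \<Omega> (\<omega> + \<psi> \<omega>)" for \<omega> v
  proof -
    obtain \<epsilon> \<gamma> \<gamma>' where \<epsilon>: "\<epsilon> > 0"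
      and g: "\<forall>t\<in>{-\<epsilon><..<\<epsilon>}. (\<gamma> has_vector_derivative \<gamma>' t) (at t) \<and> \<gamma> t \<in> M \<inter> \<Omega>"
      and g0: "\<gamma> 0 = \<omega> + \<psi> \<omega>" and vg: "v = \<gamma>' 0"
      using v unfolding tangent_space_def by blast
    define I where "I = {-\<epsilon><..<\<epsilon>}"
    have I0: "0 \<in> I" using \<epsilon> by (simp add: I_def)
    have Iopen: "open I" by (simp add: I_def)
    have atI: "at 0 within I = at 0" by (rule at_within_open[OF I0 Iopen])
    have dg: "(\<gamma> has_derivative (\<lambda>s. s *\<^sub>R \<gamma>' 0)) (at 0)"
      using g I0 unfolding I_def has_vector_derivative_def by blast
    define q where "q = (\<lambda>s. P0 (\<gamma> s))"
    have dq: "(q has_derivative (\<lambda>s. P0 (s *\<^sub>R \<gamma>' 0))) (at 0 within I)"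
      unfolding q_def by (rule has_derivative_at_withinI[OF bounded_linear.has_derivative[OF P0bl dg]])
    have q0: "q 0 = \<omega>" using phiM(2)[OF w] g0 by (simp add: q_def)
    have qI: "q ` I \<subseteq> \<Omega>0" using g MO(1) by (auto simp: q_def I_def)
    have dpsi: "(\<psi> has_derivative D\<psi> \<omega>) (at (q 0) within q ` I)"
      unfolding q0 by (rule has_derivative_subset[OF D\<psi>[OF w] qI])
    have comp: "((\<psi> \<circ> q) has_derivative (D\<psi> \<omega> \<circ> (\<lambda>s. P0 (s *\<^sub>R \<gamma>' 0)))) (at 0 within I)"
      by (rule diff_chain_within[OF dq dpsi])
    have sum: "((\<lambda>s. q s + (\<psi> \<circ> q) s) has_derivative (\<lambda>s. P0 (s *\<^sub>R \<gamma>' 0) + (D\<psi> \<omega> \<circ> (\<lambda>s. P0 (s *\<^sub>R \<gamma>' 0))) s)) (at 0 within I)"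
      by (rule has_derivative_add[OF dq comp])
    have "(\<gamma> has_derivative (\<lambda>s. P0 (s *\<^sub>R \<gamma>' 0) + (D\<psi> \<omega> \<circ> (\<lambda>s. P0 (s *\<^sub>R \<gamma>' 0))) s)) (at 0 within I)"
    proof (rule has_derivative_transform_within[OF sum zero_less_one I0])
      fix x assume "x \<in> I"
      then have "\<gamma> x \<in> M \<inter> \<Omega>" using g by (simp add: I_def)
      then show "q x + (\<psi> \<circ> q) x = \<gamma> x" using MO(2) by (simp add: q_def)
    qed
    then have "(\<gamma> has_derivative (\<lambda>s. P0 (s *\<^sub>R \<gamma>' 0) + (D\<psi> \<omega> \<circ> (\<lambda>s. P0 (s *\<^sub>R \<gamma>' 0))) s)) (at 0)"
      unfolding atI .
    then have "(\<lambda>s. s *\<^sub>R \<gamma>' 0) = (\<lambda>s. P0 (s *\<^sub>R \<gamma>' 0) + (D\<psi> \<omega> \<circ> (\<lambda>s. P0 (s *\<^sub>R \<gamma>' 0))) s)"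
      by (rule has_derivative_unique[OF dg])
    then have "(1::real) *\<^sub>R \<gamma>' 0 = P0 ((1::real) *\<^sub>R \<gamma>' 0) + D\<psi> \<omega> (P0 ((1::real) *\<^sub>R \<gamma>' 0))"
      by (metis comp_apply)
    then have "v = P0 (\<gamma>' 0) + D\<psi> \<omega> (P0 (\<gamma>' 0))" by (simp add: vg)
    then show ?thesis using P0V0 by blast
  qed
  have T2: "h + D\<psi> \<omega> h \<in> tangent_space M \<Omega> (\<omega> + \<psi> \<omega>)" if w: "\<omega> \<in> \<Omega>0" and h: "h \<in> V0" for \<omega> h
  proof -
    obtain e where e: "e > 0" "\<forall>t. \<bar>t\<bar> < e \<longrightarrow> \<omega> + t *\<^sub>R h \<in> \<Omega>0" using line[OF w h] by blast
    define I where "I = {-e<..<e}"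
    define p where "p = (\<lambda>t::real. \<omega> + t *\<^sub>R h)"
    define \<gamma> where "\<gamma> = (\<lambda>t. p t + \<psi> (p t))"
    define wf where "wf = (\<lambda>t. D\<psi> (p t) h)"
    define \<gamma>' where "\<gamma>' = (\<lambda>t. h + wf t)"
    have pI: "p t \<in> \<Omega>0" if "t \<in> I" for t using e that by (auto simp: p_def I_def)
    have pIs: "p ` I \<subseteq> \<Omega>0" using pI by blast
    have Iopen: "open I" by (simp add: I_def)
    have I0: "0 \<in> I" using e by (simp add: I_def)
    have dgam: "(\<gamma> has_vector_derivative \<gamma>' t) (at t)" if t: "t \<in> I" for t
    proof -
      have dp: "(p has_derivative (\<lambda>s. s *\<^sub>R h)) (at t within I)"
        unfolding p_def by (intro derivative_eq_intros) auto
      have dpsi: "(\<psi> has_derivative D\<psi> (p t)) (at (p t) within p ` I)"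
        by (rule has_derivative_subset[OF D\<psi>[OF pI[OF t]] pIs])
      have comp: "((\<psi> \<circ> p) has_derivative (D\<psi> (p t) \<circ> (\<lambda>s. s *\<^sub>R h))) (at t within I)"
        by (rule diff_chain_within[OF dp dpsi])
      have sum: "((\<lambda>s. p s + (\<psi> \<circ> p) s) has_derivative (\<lambda>s. s *\<^sub>R h + (D\<psi> (p t) \<circ> (\<lambda>s. s *\<^sub>R h)) s)) (at t within I)"
        by (rule has_derivative_add[OF dp comp])
      have eqf: "(\<lambda>s. s *\<^sub>R h + (D\<psi> (p t) \<circ> (\<lambda>s. s *\<^sub>R h)) s) = (\<lambda>s. s *\<^sub>R \<gamma>' t)"
        by (simp add: \<gamma>'_def wf_def fun_eq_iff scaleR_add_right linear_scale[OF bounded_linear.linear[OF D\<psi>bl[OF pI[OF t]]]])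
      have "(\<gamma> has_derivative (\<lambda>s. s *\<^sub>R \<gamma>' t)) (at t within I)"
        using sum unfolding eqf by (simp add: \<gamma>_def comp_def)
      then show ?thesis unfolding has_vector_derivative_def at_within_open[OF t Iopen] .
    qed
    have gM: "\<gamma> t \<in> M \<inter> \<Omega>" if "t \<in> I" for t using phiM(1)[OF pI[OF that]] by (simp add: \<gamma>_def)
    have cont: "continuous_on I \<gamma>'"
      unfolding continuous_on_eq_continuous_within
    proof
      fix t0 assume t0: "t0 \<in> I"
      have "(\<gamma> has_derivative (\<lambda>s. s *\<^sub>R \<gamma>' t0)) (at t0)"
        using dgam[OF t0] by (simp add: has_vector_derivative_def)
      then have "continuous (at t0) \<gamma>" by (rule has_derivative_continuous)
      then have gcont: "continuous (at t0 within I) \<gamma>" by (rule continuous_at_imp_continuous_at_within)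
      have gU: "\<gamma> t0 \<in> U" using gM[OF t0] \<Omega>U(2) by blast
      have dGc: "continuous (at t0 within I) (\<lambda>t. dG (\<gamma> t))"
        by (rule continuous_within_compose3[OF dGcont[OF gU] gcont])
      obtain K0 where K0: "\<forall>v\<in>V1. norm v \<le> K0 * norm (B (\<gamma> t0) v)"
        using KTi gM[OF t0] by blast
      have wcont: "continuous (at t0 within I) wf"
      proof (rule cont_w[OF J(1) V1(1) _ t0 _ dGc])
        show "\<forall>t\<in>I. wf t \<in> V1" using DV1 pI h by (simp add: wf_def)
        show "\<forall>t\<in>I. blinfun_apply (dG (\<gamma> t)) (J (h + wf t)) = 0"
          using DG0 pI h by (simp add: wf_def \<gamma>_def B_def)
        show "\<forall>v\<in>V1. norm v \<le> K0 * norm (blinfun_apply (dG (\<gamma> t0)) (J v))"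
          using K0 by (simp add: B_def)
      qed
      show "continuous (at t0 within I) \<gamma>'"
        unfolding \<gamma>'_def by (intro continuous_add continuous_const wcont)
    qed
    have "\<gamma> 0 = \<omega> + \<psi> \<omega>" by (simp add: \<gamma>_def p_def)
    moreover have "h + D\<psi> \<omega> h = \<gamma>' 0" by (simp add: \<gamma>'_def wf_def p_def)
    ultimately show ?thesis
      unfolding tangent_space_def using e(1) dgam gM cont unfolding I_def by blast
  qed
  have dEbl: "bounded_linear (blinfun_apply (dE u))" for u by (rule blinfun.bounded_linear_right)
  have dFbl: "bounded_linear (blinfun_apply (dF u))" for u by (rule blinfun.bounded_linear_right)
  have symV0: "\<forall>y\<in>J ` V0. - y \<in> J ` V0"
  proof
    fix y assume "y \<in> J ` V0"
    then obtain h where h: "h \<in> V0" "y = J h" by blast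
    then have "- h \<in> V0" using sV0 by (simp add: subspace_neg)
    then show "- y \<in> J ` V0" using h by (simp add: J.neg image_iff) (metis J.neg)
  qed
  have symT: "\<forall>y\<in>J ` tangent_space M \<Omega> (\<omega> + \<psi> \<omega>). - y \<in> J ` tangent_space M \<Omega> (\<omega> + \<psi> \<omega>)"
    if w: "\<omega> \<in> \<Omega>0" for \<omega>
  proof
    fix y assume "y \<in> J ` tangent_space M \<Omega> (\<omega> + \<psi> \<omega>)"
    then obtain v where v: "v \<in> tangent_space M \<Omega> (\<omega> + \<psi> \<omega>)" "y = J v" by blast
    obtain h where h: "h \<in> V0" "v = h + D\<psi> \<omega> h" using T1[OF w v(1)] by blast
    have mh: "- h \<in> V0" using sV0 h(1) by (simp add: subspace_neg)
    have "- v = (- h) + D\<psi> \<omega> (- h)"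
      using h(2) linear_neg[OF bounded_linear.linear[OF D\<psi>bl[OF w]]] by simp
    then have "- v \<in> tangent_space M \<Omega> (\<omega> + \<psi> \<omega>)" using T2[OF w mh] by simp
    moreover have "- y = J (- v)" using v(2) by (simp add: J.neg)
    ultimately show "- y \<in> J ` tangent_space M \<Omega> (\<omega> + \<psi> \<omega>)" by blast
  qed
  have a_le_b: "dual_norm_on (closure (J ` V0)) (blinfun_apply (dF \<omega>))
      \<le> 2 * dual_norm_on (closure (J ` tangent_space M \<Omega> (\<omega> + \<psi> \<omega>))) (blinfun_apply (dE (\<omega> + \<psi> \<omega>)))"
    if w: "\<omega> \<in> \<Omega>0" and hb: "\<forall>h\<in>V0. norm (J (h + D\<psi> \<omega> h)) \<le> 2 * norm (J h)" for \<omega>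
  proof -
    define b where "b = dual_norm_on (closure (J ` tangent_space M \<Omega> (\<omega> + \<psi> \<omega>))) (blinfun_apply (dE (\<omega> + \<psi> \<omega>)))"
    have b0: "b \<ge> 0" unfolding b_def by (rule dual_nonneg[OF dEbl symT[OF w]])
    show ?thesis unfolding b_def[symmetric]
    proof (rule dual_upper[OF dFbl])
      show "0 \<le> 2 * b" using b0 by simp
      show "\<forall>y\<in>J ` V0. blinfun_apply (dF \<omega>) y \<le> 2 * b * norm y"
      proof
        fix y assume "y \<in> J ` V0"
        then obtain h where h: "h \<in> V0" "y = J h" by blast
        define z where "z = J (h + D\<psi> \<omega> h)"
        have zT: "z \<in> closure (J ` tangent_space M \<Omega> (\<omega> + \<psi> \<omega>))"
          using T2[OF w h(1)] closure_subset by (fastforce simp: z_def)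
        have Ez: "blinfun_apply (dE (\<omega> + \<psi> \<omega>)) z \<le> b * norm z"
        proof (cases "z = 0")
          case True then show ?thesis by simp
        next
          case False
          have "blinfun_apply (dE (\<omega> + \<psi> \<omega>)) z / norm z \<le> b"
            unfolding b_def by (rule dual_lower[OF dEbl zT False])
          then show ?thesis using False by (simp add: divide_le_eq)
        qed
        have "blinfun_apply (dF \<omega>) y = blinfun_apply (dE (\<omega> + \<psi> \<omega>)) z"
          using DF[OF w h(1)] h(2) by (simp add: z_def)
        also have "\<dots> \<le> b * norm z" by (fact Ez)
        also have "\<dots> \<le> b * (2 * norm (J h))" using hb h(1) b0 by (simp add: z_def mult_left_mono)
        finally show "blinfun_apply (dF \<omega>) y \<le> 2 * b * norm y" using h(2) by simp
      qed
    qed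
  qed
  have b_le_a: "dual_norm_on (closure (J ` tangent_space M \<Omega> (\<omega> + \<psi> \<omega>))) (blinfun_apply (dE (\<omega> + \<psi> \<omega>)))
      \<le> c1 * dual_norm_on (closure (J ` V0)) (blinfun_apply (dF \<omega>))"
    if w: "\<omega> \<in> \<Omega>0" for \<omega>
  proof -
    define a where "a = dual_norm_on (closure (J ` V0)) (blinfun_apply (dF \<omega>))"
    have a0: "a \<ge> 0" unfolding a_def by (rule dual_nonneg[OF dFbl symV0])
    show ?thesis unfolding a_def[symmetric]
    proof (rule dual_upper[OF dEbl])
      show "0 \<le> c1 * a" using a0 c1pos by simp
      show "\<forall>y\<in>J ` tangent_space M \<Omega> (\<omega> + \<psi> \<omega>). blinfun_apply (dE (\<omega> + \<psi> \<omega>)) y \<le> c1 * a * norm y"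
      proof
        fix y assume "y \<in> J ` tangent_space M \<Omega> (\<omega> + \<psi> \<omega>)"
        then obtain v where v: "v \<in> tangent_space M \<Omega> (\<omega> + \<psi> \<omega>)" "y = J v" by blast
        obtain h where h: "h \<in> V0" "v = h + D\<psi> \<omega> h" using T1[OF w v(1)] by blast
        have JhS: "J h \<in> closure (J ` V0)" using h(1) closure_subset by fastforce
        have Fh: "blinfun_apply (dF \<omega>) (J h) \<le> a * norm (J h)"
        proof (cases "J h = 0")
          case True then show ?thesis by simp
        next
          case False
          have "blinfun_apply (dF \<omega>) (J h) / norm (J h) \<le> a"
            unfolding a_def by (rule dual_lower[OF dFbl JhS False])
          then show ?thesis using False by (simp add: divide_le_eq)
        qed
        have "blinfun_apply (dE (\<omega> + \<psi> \<omega>)) y = blinfun_apply (dF \<omega>) (J h)"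
          using DF[OF w h(1)] h(2) v(2) by simp
        also have "\<dots> \<le> a * norm (J h)" by (fact Fh)
        also have "\<dots> \<le> a * (c1 * norm (J (h + D\<psi> \<omega> h)))" using easy[OF w h(1)] a0 by (simp add: mult_left_mono)
        finally show "blinfun_apply (dE (\<omega> + \<psi> \<omega>)) y \<le> c1 * a * norm y" using h(2) v(2) by (simp add: algebra_simps)
      qed
    qed
  qed
  have Eubar: "E (\<omega>bar + \<psi> \<omega>bar) = E ubar" using \<omega>bar(2) by simp
  show ?thesis
  proof
    assume "\<exists>C>0. \<exists>\<sigma>'>0. \<exists>\<theta>. 0 < \<theta> \<and> \<theta> \<le> 1/2 \<and>
            (\<forall>\<omega>\<in>\<Omega>0. norm (\<omega> - \<omega>bar) \<le> \<sigma>' \<longrightarrow>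
               \<bar>E (\<omega> + \<psi> \<omega>) - E (\<omega>bar + \<psi> \<omega>bar)\<bar> powr (1 - \<theta>)
                 \<le> C * dual_norm_on (closure (J ` V0)) (blinfun_apply (dF \<omega>)))"
    then obtain C \<sigma>' \<theta> where C: "C > 0" and \<sigma>': "\<sigma>' > 0" and \<theta>: "0 < \<theta>" "\<theta> \<le> 1/2"
      and ineq: "\<forall>\<omega>\<in>\<Omega>0. norm (\<omega> - \<omega>bar) \<le> \<sigma>' \<longrightarrow>
               \<bar>E (\<omega> + \<psi> \<omega>) - E (\<omega>bar + \<psi> \<omega>bar)\<bar> powr (1 - \<theta>)
                 \<le> C * dual_norm_on (closure (J ` V0)) (blinfun_apply (dF \<omega>))" by blast
    obtain \<delta> where \<delta>: "\<delta> > 0" and hd: "\<forall>\<omega>\<in>\<Omega>0. norm (\<omega> + \<psi> \<omega> - ubar) < \<delta> \<longrightarrow> (\<forall>h\<in>V0. norm (J (h + D\<psi> \<omega> h)) \<le> 2 * norm (J h))"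
      using hard by blast
    obtain \<delta>O where \<delta>O: "\<delta>O > 0" "ball ubar \<delta>O \<subseteq> \<Omega>" using Oopen ubarO open_contains_ball by blast
    obtain KP where KP: "KP > 0" "\<And>x. norm (P0 x) \<le> norm x * KP" using bounded_linear.pos_bounded[OF P0bl] by blast
    define \<sigma> where "\<sigma> = min (\<delta>/2) (min (\<delta>O/2) (\<sigma>'/KP))"
    have \<sigma>: "\<sigma> > 0" using \<delta> \<delta>O \<sigma>' KP by (simp add: \<sigma>_def)
    have main: "\<forall>u\<in>M. norm (u - ubar) \<le> \<sigma> \<longrightarrow>
               \<bar>E u - E ubar\<bar> powr (1 - \<theta>)
                 \<le> (2 * C) * dual_norm_on (closure (J ` tangent_space M \<Omega> u)) (blinfun_apply (dE u))"
    proof (intro ballI impI)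
      fix u assume uM: "u \<in> M" and un: "norm (u - ubar) \<le> \<sigma>"
      have "dist ubar u < \<delta>O" using un \<delta>O by (simp add: dist_norm norm_minus_commute \<sigma>_def)
      then have uO: "u \<in> \<Omega>" using \<delta>O(2) by auto
      define \<omega> where "\<omega> = P0 u"
      have w: "\<omega> \<in> \<Omega>0" and u_eq: "u = \<omega> + \<psi> \<omega>" using MO[of u] uM uO by (auto simp: \<omega>_def)
      have "norm (\<omega> - \<omega>bar) = norm (P0 (u - ubar))"
        by (simp add: \<omega>_def ubar_dec[symmetric] linear_diff[OF bounded_linear.linear[OF P0bl]])
      also have "\<dots> \<le> norm (u - ubar) * KP" by (rule KP(2))
      also have "\<dots> \<le> \<sigma> * KP" using un KP by (simp add: mult_right_mono)
      also have "\<dots> \<le> (\<sigma>' / KP) * KP" using KP by (intro mult_right_mono) (auto simp: \<sigma>_def)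
      also have "\<dots> = \<sigma>'" using KP by simp
      finally have wn: "norm (\<omega> - \<omega>bar) \<le> \<sigma>'" .
      have "norm (\<omega> + \<psi> \<omega> - ubar) < \<delta>" using un \<delta> u_eq by (simp add: \<sigma>_def)
      then have hb: "\<forall>h\<in>V0. norm (J (h + D\<psi> \<omega> h)) \<le> 2 * norm (J h)" using hd w by blast
      have "\<bar>E u - E ubar\<bar> powr (1 - \<theta>) \<le> C * dual_norm_on (closure (J ` V0)) (blinfun_apply (dF \<omega>))"
        using ineq w wn u_eq Eubar by simp
      also have "\<dots> \<le> C * (2 * dual_norm_on (closure (J ` tangent_space M \<Omega> u)) (blinfun_apply (dE u)))"
        using a_le_b[OF w hb] C u_eq by (simp add: mult_left_mono)
      finally show "\<bar>E u - E ubar\<bar> powr (1 - \<theta>) \<le> 2 * C * dual_norm_on (closure (J ` tangent_space M \<Omega> u)) (blinfun_apply (dE u))"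
        by simp
    qed
    show "\<exists>C>0. \<exists>\<sigma>>0. \<exists>\<theta>. 0 < \<theta> \<and> \<theta> \<le> 1/2 \<and>
            (\<forall>u\<in>M. norm (u - ubar) \<le> \<sigma> \<longrightarrow>
               \<bar>E u - E ubar\<bar> powr (1 - \<theta>)
                 \<le> C * dual_norm_on (closure (J ` tangent_space M \<Omega> u)) (blinfun_apply (dE u)))"
      apply (rule exI[of _ "2 * C"], rule conjI, simp add: C)
      apply (rule exI[of _ \<sigma>], rule conjI, simp add: \<sigma>)
      apply (rule exI[of _ \<theta>])
      apply (intro conjI \<theta>(1) \<theta>(2) main)
      done
  next
    assume "\<exists>C>0. \<exists>\<sigma>>0. \<exists>\<theta>. 0 < \<theta> \<and> \<theta> \<le> 1/2 \<and>
            (\<forall>u\<in>M. norm (u - ubar) \<le> \<sigma> \<longrightarrow>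
               \<bar>E u - E ubar\<bar> powr (1 - \<theta>)
                 \<le> C * dual_norm_on (closure (J ` tangent_space M \<Omega> u)) (blinfun_apply (dE u)))"
    then obtain C \<sigma> \<theta> where C: "C > 0" and \<sigma>: "\<sigma> > 0" and \<theta>: "0 < \<theta>" "\<theta> \<le> 1/2"
      and ineq: "\<forall>u\<in>M. norm (u - ubar) \<le> \<sigma> \<longrightarrow>
               \<bar>E u - E ubar\<bar> powr (1 - \<theta>)
                 \<le> C * dual_norm_on (closure (J ` tangent_space M \<Omega> u)) (blinfun_apply (dE u))" by blast
    have "continuous (at \<omega>bar within \<Omega>0) \<psi>" by (rule has_derivative_continuous[OF D\<psi>[OF \<omega>bar(1)]])
    then obtain \<delta>1 where \<delta>1: "\<delta>1 > 0" "\<forall>x\<in>\<Omega>0. dist x \<omega>bar < \<delta>1 \<longrightarrow> dist (\<psi> x) (\<psi> \<omega>bar) < \<sigma>/2"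
      unfolding continuous_within_eps_delta using \<sigma> by (meson half_gt_zero)
    define \<sigma>' where "\<sigma>' = min (\<delta>1/2) (\<sigma>/2)"
    have \<sigma>': "\<sigma>' > 0" using \<delta>1 \<sigma> by (simp add: \<sigma>'_def)
    have main: "\<forall>\<omega>\<in>\<Omega>0. norm (\<omega> - \<omega>bar) \<le> \<sigma>' \<longrightarrow>
               \<bar>E (\<omega> + \<psi> \<omega>) - E (\<omega>bar + \<psi> \<omega>bar)\<bar> powr (1 - \<theta>)
                 \<le> (C * c1) * dual_norm_on (closure (J ` V0)) (blinfun_apply (dF \<omega>))"
    proof (intro ballI impI)
      fix \<omega> assume w: "\<omega> \<in> \<Omega>0" and wn: "norm (\<omega> - \<omega>bar) \<le> \<sigma>'"
      define u where "u = \<omega> + \<psi> \<omega>"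
      have uM: "u \<in> M" using phiM(1)[OF w] by (simp add: u_def)
      have "dist \<omega> \<omega>bar < \<delta>1" using wn \<delta>1 by (simp add: dist_norm \<sigma>'_def)
      then have "norm (\<psi> \<omega> - \<psi> \<omega>bar) < \<sigma>/2" using \<delta>1(2) w by (simp add: dist_norm)
      moreover have "norm (\<omega> - \<omega>bar) \<le> \<sigma>/2" using wn by (simp add: \<sigma>'_def)
      moreover have "u - ubar = (\<omega> - \<omega>bar) + (\<psi> \<omega> - \<psi> \<omega>bar)" using \<omega>bar(2) by (auto simp: u_def algebra_simps)
      ultimately have "norm (u - ubar) \<le> \<sigma>" by (metis norm_triangle_ineq add_mono field_sum_of_halves less_imp_le order_trans)
      then have "\<bar>E u - E ubar\<bar> powr (1 - \<theta>) \<le> C * dual_norm_on (closure (J ` tangent_space M \<Omega> u)) (blinfun_apply (dE u))"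
        using ineq uM by blast
      also have "\<dots> \<le> C * (c1 * dual_norm_on (closure (J ` V0)) (blinfun_apply (dF \<omega>)))"
        using b_le_a[OF w] C by (simp add: u_def mult_left_mono)
      finally show "\<bar>E (\<omega> + \<psi> \<omega>) - E (\<omega>bar + \<psi> \<omega>bar)\<bar> powr (1 - \<theta>) \<le> C * c1 * dual_norm_on (closure (J ` V0)) (blinfun_apply (dF \<omega>))"
        using Eubar by (simp add: u_def mult.assoc)
    qed
    show "\<exists>C>0. \<exists>\<sigma>'>0. \<exists>\<theta>. 0 < \<theta> \<and> \<theta> \<le> 1/2 \<and>
            (\<forall>\<omega>\<in>\<Omega>0. norm (\<omega> - \<omega>bar) \<le> \<sigma>' \<longrightarrow>
               \<bar>E (\<omega> + \<psi> \<omega>) - E (\<omega>bar + \<psi> \<omega>bar)\<bar> powr (1 - \<theta>)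
                 \<le> C * dual_norm_on (closure (J ` V0)) (blinfun_apply (dF \<omega>)))"
      apply (rule exI[of _ "C * c1"], rule conjI, simp add: C c1pos)
      apply (rule exI[of _ \<sigma>'], rule conjI, simp add: \<sigma>')
      apply (rule exI[of _ \<theta>])
      apply (intro conjI \<theta>(1) \<theta>(2) main)
      done
  qed
qed

end
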